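(* Let $\mathcal{G}=(\mathcal{V},\mathcal{E})$ be a directed graph with terminals $s,t$ and $f:2^{\mathcal{E}}\to\mathbb{R}_+$ normalized, monotone nondecreasing and submodular. Then minimum $(s,t)$-cut with cost function $\hat f_{\mathrm{pf}}$ is dual to the polymatroidal network flow with capacities $\mathrm{cap}^{\mathrm{in}}_v=f|_{\delta^-(v)}$ and $\mathrm{cap}^{\mathrm{out}}_v=f|_{\delta^+(v)}$ at each node $v\in\mathcal{V}$; that is, the minimum of $\hat f_{\mathrm{pf}}(C)$ over $(s,t)$-cuts $C$ equals the maximum value of a polymatroidal $(s,t)$-flow with these capacities.
   Context: An $(s,t)$-cut is a set of edges whose removal disconnects all $s$-$t$ paths. For $C\subseteq\mathcal{E}$, let $\mathcal{P}_C$ be the family of all partitions $\Pi(C)=\{C^\Pi_v\}_{v\in\mathcal{V}}$ of $C$ obtained by assigning each edge $(u,w)\in C$ either to its tail $u$ or to its head $w$ ($C^\Pi_v$ is the set of edges assigned to $v$, possibly empty), and define $\hat f_{\mathrm{pf}}(C)=\min_{\Pi(C)\in\mathcal{P}_C}\sum_{v\in\mathcal{V}} f(C^\Pi_v)$. A polymatroidal $(s,t)$-flow is $\varphi:\mathcal{E}\to\mathbb{R}_+$ such that inflow equals outflow at every $v\notin\{s,t\}$ and, for every node $v$, $\sum_{e\in A}\varphi(e)\le \mathrm{cap}^{\mathrm{in}}_v(A)$ for all $A\subseteq\delta^-(v)$ (edges entering $v$) and $\sum_{e\in A}\varphi(e)\le \mathrm{cap}^{\mathrm{out}}_v(A)$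 for all $A\subseteq\delta^+(v)$ (edges leaving $v$); its value is the net outflow at $s$. $f|_A$ denotes the restriction of $f$ to subsets of $A$. *)

theory Defs
  imports Complex_Main
begin

definition in_edges :: "('v \<times> 'v) set \<Rightarrow> 'v \<Rightarrow> ('v \<times> 'v) set" where
  "in_edges E v = {e \<in> E. snd e = v}"

definition out_edges :: "('v \<times> 'v) set \<Rightarrow> 'v \<Rightarrow> ('v \<times> 'v) set" where
  "out_edges E v = {e \<in> E. fst e = v}"

definition is_st_cut :: "('v \<times> 'v) set \<Rightarrow> 'v \<Rightarrow> 'v \<Rightarrow> ('v \<times> 'v) set \<Rightarrow> bool" where
  "is_st_cut E s t C \<longleftrightarrow> C \<subseteq> E \<and> (s, t) \<notin> (E - C)\<^sup>*"

(* partition of C induced by assigning each edge to its tail or head: the assignment sigma *)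
definition edge_assignment :: "('v \<times> 'v) set \<Rightarrow> (('v \<times> 'v) \<Rightarrow> 'v) \<Rightarrow> bool" where
  "edge_assignment C \<sigma> \<longleftrightarrow> (\<forall>e\<in>C. \<sigma> e = fst e \<or> \<sigma> e = snd e)"

definition f_pf :: "(('v \<times> 'v) set \<Rightarrow> real) \<Rightarrow> 'v set \<Rightarrow> ('v \<times> 'v) set \<Rightarrow> real" where
  "f_pf f V C = Min {(\<Sum>v\<in>V. f {e \<in> C. \<sigma> e = v}) | \<sigma>. edge_assignment C \<sigma>}"

definition is_polymatroidal_flow ::
  "'v set \<Rightarrow> ('v \<times> 'v) set \<Rightarrow> (('v \<times> 'v) set \<Rightarrow> real) \<Rightarrow> 'v \<Rightarrow> 'v \<Rightarrow> (('v \<times> 'v) \<Rightarrow> real) \<Rightarrow> bool" where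
  "is_polymatroidal_flow V E f s t \<phi> \<longleftrightarrow>
     (\<forall>e\<in>E. \<phi> e \<ge> 0) \<and>
     (\<forall>v\<in>V - {s, t}. (\<Sum>e\<in>in_edges E v. \<phi> e) = (\<Sum>e\<in>out_edges E v. \<phi> e)) \<and>
     (\<forall>v\<in>V. \<forall>A. A \<subseteq> in_edges E v \<longrightarrow> (\<Sum>e\<in>A. \<phi> e) \<le> f A) \<and>
     (\<forall>v\<in>V. \<forall>A. A \<subseteq> out_edges E v \<longrightarrow> (\<Sum>e\<in>A. \<phi> e) \<le> f A)"

definition flow_value :: "('v \<times> 'v) set \<Rightarrow> 'v \<Rightarrow> (('v \<times> 'v) \<Rightarrow> real) \<Rightarrow> real" where
  "flow_value E s \<phi> = (\<Sum>e\<in>out_edges E s. \<phi> e) - (\<Sum>e\<in>in_edges E s. \<phi> e)"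

end

theory Submission
  imports Defs "HOL-Analysis.Analysis"
begin

locale PF =
  fixes V :: "'v set" and E :: "('v \<times> 'v) set" and s t :: 'v
    and f :: "('v \<times> 'v) set \<Rightarrow> real"
  assumes finV: "finite V" and EV: "E \<subseteq> V \<times> V"
    and sV: "s \<in> V" and tV: "t \<in> V" and st: "s \<noteq> t"
    and nonneg: "\<And>A. A \<subseteq> E \<Longrightarrow> f A \<ge> 0"
    and normalized: "f {} = 0"
    and mono: "\<And>A B. A \<subseteq> B \<Longrightarrow> B \<subseteq> E \<Longrightarrow> f A \<le> f B"
    and submod: "\<And>A B. A \<subseteq> E \<Longrightarrow> B \<subseteq> E \<Longrightarrow> f (A \<union> B) + f (A \<inter> B) \<le> f A + f B"
begin

lemma finE: "finite E"
  using finV EV by (meson finite_SigmaI finite_subset)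

abbreviation flow where "flow g \<equiv> is_polymatroidal_flow V E f s t g"

definition G :: "'v \<Rightarrow> bool \<Rightarrow> ('v \<times> 'v) set" where
  "G v b = (if b then in_edges E v else out_edges E v)"

lemma G_sub: "G v b \<subseteq> E"
  by (auto simp: G_def in_edges_def out_edges_def)

lemma fin_sub: "A \<subseteq> E \<Longrightarrow> finite A"
  using finE finite_subset by blast

lemma flow_cap: "flow \<phi> \<Longrightarrow> v \<in> V \<Longrightarrow> A \<subseteq> G v b \<Longrightarrow> sum \<phi> A \<le> f A"
  unfolding is_polymatroidal_flow_def G_def by (cases b) auto

lemma flow_nn: "flow \<phi> \<Longrightarrow> e \<in> E \<Longrightarrow> \<phi> e \<ge> 0"
  unfolding is_polymatroidal_flow_def by auto

lemma sum_group_fst: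
  assumes "S \<subseteq> V"
  shows "(\<Sum>v\<in>S. sum g (out_edges E v)) = sum g {e\<in>E. fst e \<in> S}"
proof -
  have "(\<Sum>v\<in>S. sum g {x. x \<in> {e\<in>E. fst e \<in> S} \<and> fst x = v}) = sum g {e\<in>E. fst e \<in> S}"
    by (rule sum.group) (use finE finV assms finite_subset in auto)
  moreover have "\<And>v. v \<in> S \<Longrightarrow> {x. x \<in> {e\<in>E. fst e \<in> S} \<and> fst x = v} = out_edges E v"
    by (auto simp: out_edges_def)
  ultimately show ?thesis by simp
qed

lemma sum_group_snd:
  assumes "S \<subseteq> V"
  shows "(\<Sum>v\<in>S. sum g (in_edges E v)) = sum g {e\<in>E. snd e \<in> S}"
proof -
  have "(\<Sum>v\<in>S. sum g {x. x \<in> {e\<in>E. snd e \<in> S} \<and> snd x = v}) = sum g {e\<in>E. snd e \<in> S}"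
    by (rule sum.group) (use finE finV assms finite_subset in auto)
  moreover have "\<And>v. v \<in> S \<Longrightarrow> {x. x \<in> {e\<in>E. snd e \<in> S} \<and> snd x = v} = in_edges E v"
    by (auto simp: in_edges_def)
  ultimately show ?thesis by simp
qed

lemma value_cut:
  assumes fl: "is_polymatroidal_flow V E f s t \<phi>" and SV: "S \<subseteq> V" and sS: "s \<in> S" and tS: "t \<notin> S"
  shows "flow_value E s \<phi> = sum \<phi> {e\<in>E. fst e \<in> S \<and> snd e \<notin> S} - sum \<phi> {e\<in>E. fst e \<notin> S \<and> snd e \<in> S}"
proof -
  let ?g = "\<lambda>v. sum \<phi> (out_edges E v) - sum \<phi> (in_edges E v)"
  have finS: "finite S" using SV finV finite_subset by blast
  have "(\<Sum>v\<in>S. ?g v) = ?g s + (\<Sum>v\<in>S-{s}. ?g v)"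
    using finS sS by (simp add: sum.remove)
  also have "(\<Sum>v\<in>S-{s}. ?g v) = 0"
  proof (rule sum.neutral, rule ballI)
    fix v assume "v \<in> S - {s}"
    then have "v \<in> V - {s,t}" using SV tS by auto
    then show "?g v = 0" using fl unfolding is_polymatroidal_flow_def by auto
  qed
  finally have 1: "flow_value E s \<phi> = (\<Sum>v\<in>S. ?g v)" by (simp add: flow_value_def)
  have 2: "(\<Sum>v\<in>S. ?g v) = sum \<phi> {e\<in>E. fst e \<in> S} - sum \<phi> {e\<in>E. snd e \<in> S}"
    by (simp add: sum_subtractf sum_group_fst[OF SV] sum_group_snd[OF SV])
  have a: "sum \<phi> {e\<in>E. fst e \<in> S} = sum \<phi> {e\<in>E. fst e \<in> S \<and> snd e \<in> S} + sum \<phi> {e\<in>E. fst e \<in> S \<and> snd e \<notin> S}"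
    by (subst sum.union_disjoint[symmetric]) (use finE in \<open>auto intro: sum.cong\<close>)
  have b: "sum \<phi> {e\<in>E. snd e \<in> S} = sum \<phi> {e\<in>E. fst e \<in> S \<and> snd e \<in> S} + sum \<phi> {e\<in>E. fst e \<notin> S \<and> snd e \<in> S}"
    by (subst sum.union_disjoint[symmetric]) (use finE in \<open>auto intro: sum.cong\<close>)
  show ?thesis using 1 2 a b by simp
qed

lemma fpf_set_fin:
  assumes "C \<subseteq> E"
  shows "finite {(\<Sum>v\<in>V. f {e \<in> C. \<sigma> e = v}) | \<sigma>. edge_assignment C \<sigma>}"
proof -
  have "{(\<Sum>v\<in>V. f {e \<in> C. \<sigma> e = v}) | \<sigma>. edge_assignment C \<sigma>}
        \<subseteq> (\<lambda>F. \<Sum>v\<in>V. f (F v)) ` (PiE V (\<lambda>_. Pow C))"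
  proof
    fix x assume "x \<in> {(\<Sum>v\<in>V. f {e \<in> C. \<sigma> e = v}) | \<sigma>. edge_assignment C \<sigma>}"
    then obtain \<sigma> where x: "x = (\<Sum>v\<in>V. f {e \<in> C. \<sigma> e = v})" by blast
    let ?F = "restrict (\<lambda>v. {e \<in> C. \<sigma> e = v}) V"
    have "?F \<in> PiE V (\<lambda>_. Pow C)" by auto
    moreover have "x = (\<Sum>v\<in>V. f (?F v))" unfolding x by (rule sum.cong) auto
    ultimately show "x \<in> (\<lambda>F. \<Sum>v\<in>V. f (F v)) ` (PiE V (\<lambda>_. Pow C))" by blast
  qed
  moreover have "finite (PiE V (\<lambda>_. Pow C))"
    using finV fin_sub[OF assms] by (simp add: finite_PiE)
  ultimately show ?thesis by (meson finite_imageI finite_subset)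
qed

lemma fpf_le:
  assumes "C \<subseteq> E" "edge_assignment C \<sigma>"
  shows "f_pf f V C \<le> (\<Sum>v\<in>V. f {e \<in> C. \<sigma> e = v})"
  unfolding f_pf_def by (rule Min_le) (use fpf_set_fin[OF assms(1)] assms(2) in auto)

lemma fpf_ge:
  assumes "C \<subseteq> E" "\<And>\<sigma>. edge_assignment C \<sigma> \<Longrightarrow> x \<le> (\<Sum>v\<in>V. f {e \<in> C. \<sigma> e = v})"
  shows "x \<le> f_pf f V C"
proof -
  have ne: "{(\<Sum>v\<in>V. f {e \<in> C. \<sigma> e = v}) | \<sigma>. edge_assignment C \<sigma>} \<noteq> {}"
    using edge_assignment_def by blast
  show ?thesis unfolding f_pf_def
    using Min_ge_iff[OF fpf_set_fin[OF assms(1)] ne] assms(2) by auto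
qed

lemma weak_duality:
  assumes fl: "flow \<psi>" and cut: "is_st_cut E s t C"
  shows "flow_value E s \<psi> \<le> f_pf f V C"
proof -
  have CE: "C \<subseteq> E" and nst: "(s, t) \<notin> (E - C)\<^sup>*" using cut by (auto simp: is_st_cut_def)
  define S where "S = {v. (s, v) \<in> (E - C)\<^sup>*}"
  have SV: "S \<subseteq> V"
  proof
    fix v assume "v \<in> S"
    then have "(s, v) \<in> (E - C)\<^sup>*" by (simp add: S_def)
    then show "v \<in> V" by (cases rule: rtranclE) (use sV EV in auto)
  qed
  have sS: "s \<in> S" and tS: "t \<notin> S" using nst by (auto simp: S_def)
  define Oc where "Oc = {e\<in>E. fst e \<in> S \<and> snd e \<notin> S}"
  have OcC: "Oc \<subseteq> C"
  proof
    fix e assume "e \<in> Oc"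
    then have "e \<in> E" "(s, fst e) \<in> (E - C)\<^sup>*" "(s, snd e) \<notin> (E - C)\<^sup>*" by (auto simp: Oc_def S_def)
    then show "e \<in> C" using rtrancl_into_rtrancl[of s "fst e" "E - C" "snd e"] by (cases e) auto
  qed
  have "flow_value E s \<psi> = sum \<psi> Oc - sum \<psi> {e\<in>E. fst e \<notin> S \<and> snd e \<in> S}"
    using value_cut[OF fl SV sS tS] by (simp add: Oc_def)
  also have "\<dots> \<le> sum \<psi> Oc"
  proof -
    have "0 \<le> sum \<psi> {e\<in>E. fst e \<notin> S \<and> snd e \<in> S}"
      using flow_nn[OF fl] by (intro sum_nonneg) auto
    then show ?thesis by linarith
  qed
  finally have v1: "flow_value E s \<psi> \<le> sum \<psi> Oc" .
  show ?thesis
  proof (rule fpf_ge[OF CE])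
    fix \<sigma> assume asg: "edge_assignment C \<sigma>"
    have OcE: "Oc \<subseteq> E" using OcC CE by auto
    have "sum \<psi> Oc = (\<Sum>v\<in>V. sum \<psi> {e. e \<in> Oc \<and> \<sigma> e = v})"
    proof (rule sum.group[symmetric])
      show "finite Oc" using fin_sub[OF OcE] .
      show "finite V" using finV .
      show "\<sigma> ` Oc \<subseteq> V"
      proof
        fix x assume "x \<in> \<sigma> ` Oc"
        then obtain e where "e \<in> Oc" "x = \<sigma> e" by blast
        moreover have "\<sigma> e = fst e \<or> \<sigma> e = snd e" using asg OcC \<open>e \<in> Oc\<close> unfolding edge_assignment_def by auto
        moreover have "fst e \<in> V" "snd e \<in> V" using \<open>e \<in> Oc\<close> OcE EV by auto
        ultimately show "x \<in> V" by auto
      qed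
    qed
    also have "\<dots> \<le> (\<Sum>v\<in>V. f {e \<in> C. \<sigma> e = v})"
    proof (rule sum_mono)
      fix v assume vV: "v \<in> V"
      have sub: "{e. e \<in> Oc \<and> \<sigma> e = v} \<subseteq> G v (v \<notin> S)"
      proof
        fix e assume "e \<in> {e. e \<in> Oc \<and> \<sigma> e = v}"
        then have "e \<in> Oc" "\<sigma> e = v" by auto
        moreover have "\<sigma> e = fst e \<or> \<sigma> e = snd e" using asg \<open>e \<in> Oc\<close> OcC unfolding edge_assignment_def by auto
        ultimately show "e \<in> G v (v \<notin> S)"
          unfolding G_def Oc_def in_edges_def out_edges_def by auto
      qed
      have "sum \<psi> {e. e \<in> Oc \<and> \<sigma> e = v} \<le> f {e. e \<in> Oc \<and> \<sigma> e = v}"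
        by (rule flow_cap[OF fl vV sub])
      also have "\<dots> \<le> f {e \<in> C. \<sigma> e = v}"
        by (rule mono) (use OcC CE in auto)
      finally show "sum \<psi> {e. e \<in> Oc \<and> \<sigma> e = v} \<le> f {e \<in> C. \<sigma> e = v}" .
    qed
    finally show "flow_value E s \<psi> \<le> (\<Sum>v\<in>V. f {e \<in> C. \<sigma> e = v})" using v1 by linarith
  qed
qed

end

locale PFf = PF V E s t f
  for V :: "'v set" and E :: "('v \<times> 'v) set" and s t :: 'v and f :: "('v \<times> 'v) set \<Rightarrow> real" +
  fixes \<phi> :: "('v \<times> 'v) \<Rightarrow> real"
  assumes fl: "is_polymatroidal_flow V E f s t \<phi>"
begin

definition tight :: "('v \<times> 'v) set \<Rightarrow> bool" where
  "tight A \<longleftrightarrow> sum \<phi> A = f A"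

definition free :: "'v \<Rightarrow> bool \<Rightarrow> ('v \<times> 'v) \<Rightarrow> bool" where
  "free v b e \<longleftrightarrow> (\<forall>A. A \<subseteq> G v b \<longrightarrow> tight A \<longrightarrow> e \<notin> A)"

definition exch :: "'v \<Rightarrow> bool \<Rightarrow> ('v \<times> 'v) \<Rightarrow> ('v \<times> 'v) \<Rightarrow> bool" where
  "exch v b e e' \<longleftrightarrow> (\<forall>A. A \<subseteq> G v b \<longrightarrow> tight A \<longrightarrow> e \<in> A \<longrightarrow> e' \<in> A)"

definition D :: "'v \<Rightarrow> bool \<Rightarrow> ('v \<times> 'v) \<Rightarrow> ('v \<times> 'v) set" where
  "D v b e = {x \<in> G v b. exch v b e x}"

lemma tight_empty: "tight {}"
  by (simp add: tight_def normalized)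

lemma tight_Un_Int:
  assumes v: "v \<in> V" and A: "A \<subseteq> G v b" and B: "B \<subseteq> G v b" and tA: "tight A" and tB: "tight B"
  shows "tight (A \<union> B) \<and> tight (A \<inter> B)"
proof -
  have fA: "finite A" and fB: "finite B" using A B G_sub fin_sub by blast+
  have "f (A \<union> B) + f (A \<inter> B) \<le> f A + f B" using submod A B G_sub by blast
  moreover have "sum \<phi> (A \<union> B) + sum \<phi> (A \<inter> B) = sum \<phi> A + sum \<phi> B"
    using sum.union_inter[OF fA fB] .
  moreover have "sum \<phi> (A \<union> B) \<le> f (A \<union> B)" using flow_cap[OF fl v] A B by auto
  moreover have "sum \<phi> (A \<inter> B) \<le> f (A \<inter> B)" using flow_cap[OF fl v, of "A \<inter> B" b] A B by auto
  ultimately show ?thesis using tA tB unfolding tight_def by linarith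
qed

lemma tight_Union:
  assumes v: "v \<in> V" and fin: "finite I" and H: "\<And>i. i \<in> I \<Longrightarrow> A i \<subseteq> G v b \<and> tight (A i)"
  shows "tight (\<Union>i\<in>I. A i)"
  using fin H
proof (induction I rule: finite_induct)
  case empty then show ?case by (simp add: tight_empty)
next
  case (insert i I)
  have "(\<Union>j\<in>insert i I. A j) = A i \<union> (\<Union>j\<in>I. A j)" by auto
  moreover have "tight (\<Union>j\<in>I. A j)" using insert by auto
  moreover have "(\<Union>j\<in>I. A j) \<subseteq> G v b" using insert.prems by auto
  ultimately show ?case using tight_Un_Int[OF v, of "A i" b "\<Union>j\<in>I. A j"] insert.prems by auto
qed

lemma tight_Inter:
  assumes v: "v \<in> V" and fin: "finite F" and ne: "F \<noteq> {}" and H: "\<And>A. A \<in> F \<Longrightarrow> A \<subseteq> G v b \<and> tight A"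
  shows "tight (\<Inter>F) \<and> \<Inter>F \<subseteq> G v b"
  using fin ne H
proof (induction F rule: finite_ne_induct)
  case (singleton A) then show ?case by auto
next
  case (insert A F)
  have "\<Inter>(insert A F) = A \<inter> \<Inter>F" by auto
  then show ?case using tight_Un_Int[OF v, of A b "\<Inter>F"] insert by auto
qed

lemma D_tight:
  assumes v: "v \<in> V" and nf: "\<not> free v b e"
  shows "tight (D v b e)" "e \<in> D v b e" "D v b e \<subseteq> G v b"
proof -
  let ?F = "{A. A \<subseteq> G v b \<and> tight A \<and> e \<in> A}"
  have finF: "finite ?F"
  proof -
    have "?F \<subseteq> Pow (G v b)" by auto
    moreover have "finite (G v b)" using G_sub fin_sub by blast
    ultimately show ?thesis by (meson finite_Pow_iff finite_subset)
  qed
  have neF: "?F \<noteq> {}" using nf unfolding free_def by auto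
  have eq: "D v b e = \<Inter>?F" using neF unfolding D_def exch_def by auto
  have "tight (\<Inter>?F) \<and> \<Inter>?F \<subseteq> G v b" by (rule tight_Inter[OF v finF neF]) auto
  then show "tight (D v b e)" "D v b e \<subseteq> G v b" using eq by auto
  show "e \<in> D v b e" using eq neF by auto
qed

lemma D_pos:
  assumes v: "v \<in> V" and nf: "\<not> free v b e" and x: "x \<in> D v b e" and xe: "x \<noteq> e"
  shows "\<phi> x > 0"
proof (rule ccontr)
  assume "\<not> \<phi> x > 0"
  moreover have xE: "x \<in> E" using x D_tight(3)[OF v nf] G_sub by auto
  moreover have "\<phi> x \<ge> 0" using flow_nn[OF fl xE] .
  ultimately have z: "\<phi> x = 0" by linarith
  let ?A = "D v b e - {x}"
  have DG: "D v b e \<subseteq> G v b" using D_tight(3)[OF v nf] .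
  have fD: "finite (D v b e)" using DG G_sub fin_sub by blast
  have "sum \<phi> ?A = sum \<phi> (D v b e)" using z x fD by (simp add: sum_diff1)
  also have "\<dots> = f (D v b e)" using D_tight(1)[OF v nf] by (simp add: tight_def)
  also have "\<dots> \<ge> f ?A" using mono[of ?A "D v b e"] DG G_sub by auto
  finally have "sum \<phi> ?A \<ge> f ?A" .
  moreover have "sum \<phi> ?A \<le> f ?A" using flow_cap[OF fl v, of ?A b] DG by auto
  ultimately have "tight ?A" by (simp add: tight_def)
  moreover have "e \<in> ?A" using D_tight(2)[OF v nf] xe by auto
  moreover have "?A \<subseteq> G v b" using DG by auto
  ultimately have "x \<in> ?A" using x unfolding D_def exch_def by auto
  then show False by auto
qed

inductive_set R :: "(('v \<times> 'v) \<times> bool) set" where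
  st_p: "e \<in> out_edges E s \<Longrightarrow> free s False e \<Longrightarrow> (e, True) \<in> R"
| st_m: "e \<in> in_edges E s \<Longrightarrow> \<phi> e > 0 \<Longrightarrow> (e, False) \<in> R"
| t1i: "(e, True) \<in> R \<Longrightarrow> e' \<in> in_edges E (snd e) \<Longrightarrow> \<phi> e' > 0 \<Longrightarrow> exch (snd e) True e e' \<Longrightarrow> (e', False) \<in> R"
| t1o: "(e, False) \<in> R \<Longrightarrow> e' \<in> out_edges E (fst e) \<Longrightarrow> exch (fst e) False e' e \<Longrightarrow> (e', True) \<in> R"
| t2: "(e, True) \<in> R \<Longrightarrow> free (snd e) True e \<Longrightarrow> e' \<in> out_edges E (snd e) \<Longrightarrow> free (snd e) False e' \<Longrightarrow> (e', True) \<in> R"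
| t3: "(e, False) \<in> R \<Longrightarrow> e' \<in> in_edges E (fst e) \<Longrightarrow> \<phi> e' > 0 \<Longrightarrow> (e', False) \<in> R"

lemma R_E: "(e, b) \<in> R \<Longrightarrow> e \<in> E"
  by (induction rule: R.induct) (auto simp: in_edges_def out_edges_def)

lemma R_pos': "(e, b) \<in> R \<Longrightarrow> \<not> b \<Longrightarrow> \<phi> e > 0"
  by (induction rule: R.induct) auto

lemma R_pos: "(e, False) \<in> R \<Longrightarrow> \<phi> e > 0"
  using R_pos' by blast


definition cc :: "(('v \<times> 'v) \<times> bool) \<Rightarrow> ('v \<times> 'v) \<Rightarrow> real" where
  "cc \<alpha> x = (if x = fst \<alpha> then (if snd \<alpha> then 1 else -1) else 0)"

definition exv :: "(('v \<times> 'v) \<times> bool) \<Rightarrow> 'v" where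
  "exv \<alpha> = (if snd \<alpha> then snd (fst \<alpha>) else fst (fst \<alpha>))"

definition env :: "(('v \<times> 'v) \<times> bool) \<Rightarrow> 'v" where
  "env \<alpha> = (if snd \<alpha> then fst (fst \<alpha>) else snd (fst \<alpha>))"

definition cone :: "'v \<Rightarrow> bool \<Rightarrow> (('v \<times> 'v) \<Rightarrow> real) \<Rightarrow> bool" where
  "cone v b g \<longleftrightarrow> (\<forall>A. A \<subseteq> G v b \<longrightarrow> tight A \<longrightarrow> sum g A \<le> 0)"

definition excess :: "(('v \<times> 'v) \<Rightarrow> real) \<Rightarrow> 'v \<Rightarrow> real" where
  "excess g v = sum g (in_edges E v) - sum g (out_edges E v)"

definition Inv :: "(('v \<times> 'v) \<times> bool) \<Rightarrow> (('v \<times> 'v) \<Rightarrow> real) \<Rightarrow> bool" where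
  "Inv \<alpha> d \<longleftrightarrow> (\<forall>e\<in>E. d e < 0 \<longrightarrow> \<phi> e > 0) \<and>
     (\<forall>v\<in>V. \<forall>b. cone v b (\<lambda>x. d x - (if v = exv \<alpha> \<and> b = snd \<alpha> then cc \<alpha> x else 0))) \<and>
     (\<forall>v\<in>V. excess d v = (if v = exv \<alpha> then 1 else 0) - (if v = s then 1 else 0))"

lemma finG: "finite (G v b)"
  using G_sub fin_sub by blast

lemma cone_add: "cone v b g \<Longrightarrow> cone v b h \<Longrightarrow> cone v b (\<lambda>x. g x + h x)"
  unfolding cone_def by (auto simp: sum.distrib intro: add_nonpos_nonpos)

lemma cone_cong: "(\<And>x. x \<in> G v b \<Longrightarrow> g x = h x) \<Longrightarrow> cone v b g \<Longrightarrow> cone v b h"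
  unfolding cone_def
proof (intro allI impI)
  fix A assume eq: "\<And>x. x \<in> G v b \<Longrightarrow> g x = h x" and c: "\<forall>A. A \<subseteq> G v b \<longrightarrow> tight A \<longrightarrow> sum g A \<le> 0"
    and A: "A \<subseteq> G v b" and tA: "tight A"
  have "sum h A = sum g A" using eq A by (intro sum.cong) auto
  then show "sum h A \<le> 0" using c A tA by auto
qed

lemma cone_nonpos: "(\<And>x. g x \<le> 0) \<Longrightarrow> cone v b g"
  unfolding cone_def by (auto intro: sum_nonpos)

lemma cone_free: "free v b e \<Longrightarrow> cone v b (\<lambda>x. if x = e then 1 else 0)"
  unfolding cone_def free_def
proof (intro allI impI)
  fix A assume fr: "\<forall>A. A \<subseteq> G v b \<longrightarrow> tight A \<longrightarrow> e \<notin> A" and A: "A \<subseteq> G v b" and tA: "tight A"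
  have "finite A" using A finG finite_subset by blast
  then have "sum (\<lambda>x. if x = e then 1 else 0) A = (if e \<in> A then 1 else (0::real))" by (simp add: sum.delta)
  then show "sum (\<lambda>x. if x = e then (1::real) else 0) A \<le> 0" using fr A tA by auto
qed

lemma cone_exch: "exch v b e e' \<Longrightarrow> cone v b (\<lambda>x. (if x = e then 1 else 0) + (if x = e' then -1 else 0))"
  unfolding cone_def exch_def
proof (intro allI impI)
  fix A assume ex: "\<forall>A. A \<subseteq> G v b \<longrightarrow> tight A \<longrightarrow> e \<in> A \<longrightarrow> e' \<in> A" and A: "A \<subseteq> G v b" and tA: "tight A"
  have "finite A" using A finG finite_subset by blast
  then have "sum (\<lambda>x. (if x = e then 1 else 0) + (if x = e' then -1 else 0)) A = (if e \<in> A then 1 else 0) + (if e' \<in> A then -1 else (0::real))"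
    by (simp add: sum.distrib sum.delta)
  then show "sum (\<lambda>x. (if x = e then 1 else 0) + (if x = e' then -1 else (0::real))) A \<le> 0"
    using ex A tA by auto
qed

lemma cc_zero:
  assumes "x \<in> G v b" "\<not> (v = env \<alpha> \<and> b = (\<not> snd \<alpha>))" "\<not> (v = exv \<alpha> \<and> b = snd \<alpha>)"
  shows "cc \<alpha> x = 0"
  using assms unfolding cc_def env_def exv_def G_def in_edges_def out_edges_def
  by (cases b; cases "snd \<alpha>") auto

lemma cc_nonpos: "\<not> snd \<alpha> \<Longrightarrow> cc \<alpha> x \<le> 0"
  unfolding cc_def by auto

lemma excess_add: "excess (\<lambda>x. g x + h x) v = excess g v + excess h v"
  unfolding excess_def by (simp add: sum.distrib)

lemma excess_cc:
  assumes "fst \<alpha> \<in> E"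
  shows "excess (cc \<alpha>) v = (if v = exv \<alpha> then 1 else 0) - (if v = env \<alpha> then 1 else 0)"
proof -
  have fi: "finite (in_edges E v)" "finite (out_edges E v)"
    using fin_sub by (auto simp: in_edges_def out_edges_def)
  have "sum (cc \<alpha>) (in_edges E v) = (if fst \<alpha> \<in> in_edges E v then (if snd \<alpha> then 1 else -1) else 0)"
    unfolding cc_def using fi by (simp add: sum.delta)
  moreover have "sum (cc \<alpha>) (out_edges E v) = (if fst \<alpha> \<in> out_edges E v then (if snd \<alpha> then 1 else -1) else 0)"
    unfolding cc_def using fi by (simp add: sum.delta)
  ultimately show ?thesis using assms unfolding excess_def exv_def env_def in_edges_def out_edges_def
    by (cases "snd \<alpha>") auto
qed

lemma cone_beta:
  assumes "snd \<beta> \<Longrightarrow> v = env \<beta> \<Longrightarrow> b = (\<not> snd \<beta>) \<Longrightarrow> free v b (fst \<beta>)"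
  shows "cone v b (\<lambda>x. if v = exv \<beta> \<and> b = snd \<beta> then 0 else cc \<beta> x)"
proof (cases "v = exv \<beta> \<and> b = snd \<beta>")
  case True then show ?thesis by (simp add: cone_nonpos)
next
  case F: False
  show ?thesis
  proof (cases "snd \<beta>")
    case False then show ?thesis by (intro cone_nonpos) (simp add: cc_nonpos)
  next
    case True
    show ?thesis
    proof (cases "v = env \<beta> \<and> b = (\<not> snd \<beta>)")
      case True2: True
      have "cone v b (\<lambda>x. if x = fst \<beta> then 1 else 0)" using assms True True2 cone_free by blast
      then show ?thesis by (rule cone_cong[rotated]) (use F True in \<open>auto simp: cc_def\<close>)
    next
      case False
      have "cone v b (\<lambda>x. 0)" by (simp add: cone_nonpos)
      then show ?thesis by (rule cone_cong[rotated]) (use F False cc_zero in auto)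
    qed
  qed
qed

lemma cone_alpha:
  assumes "snd \<alpha> \<Longrightarrow> v = exv \<alpha> \<Longrightarrow> b = snd \<alpha> \<Longrightarrow> free v b (fst \<alpha>)"
  shows "cone v b (\<lambda>x. if v = exv \<alpha> \<and> b = snd \<alpha> then cc \<alpha> x else 0)"
proof (cases "v = exv \<alpha> \<and> b = snd \<alpha>")
  case False then show ?thesis by (intro cone_nonpos) (use False in auto)
next
  case T: True
  show ?thesis
  proof (cases "snd \<alpha>")
    case False then show ?thesis by (intro cone_nonpos) (simp add: cc_nonpos)
  next
    case True
    have "cone v b (\<lambda>x. if x = fst \<alpha> then 1 else 0)" using assms True T cone_free by blast
    then show ?thesis by (rule cone_cong[rotated]) (use T True in \<open>auto simp: cc_def\<close>)
  qed
qed

lemma inv_step: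
  assumes I: "Inv \<alpha> d" and bE: "fst \<beta> \<in> E" and bpos: "\<not> snd \<beta> \<Longrightarrow> \<phi> (fst \<beta>) > 0"
    and en: "env \<beta> = exv \<alpha>"
    and H: "\<And>v b. v \<in> V \<Longrightarrow> cone v b (\<lambda>x. (if v = exv \<alpha> \<and> b = snd \<alpha> then cc \<alpha> x else 0) + (if v = exv \<beta> \<and> b = snd \<beta> then 0 else cc \<beta> x))"
  shows "Inv \<beta> (\<lambda>x. d x + cc \<beta> x)"
  unfolding Inv_def
proof (intro conjI ballI allI impI)
  fix e assume "e \<in> E" "d e + cc \<beta> e < 0"
  then show "\<phi> e > 0"
  proof (cases "d e < 0")
    case True then show ?thesis using I \<open>e \<in> E\<close> unfolding Inv_def by auto
  next
    case False
    then have "cc \<beta> e < 0" using \<open>d e + cc \<beta> e < 0\<close> by linarith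
    then have "e = fst \<beta>" "\<not> snd \<beta>" unfolding cc_def by (auto split: if_splits)
    then show ?thesis using bpos by auto
  qed
next
  fix v b assume v: "v \<in> V"
  have c1: "cone v b (\<lambda>x. d x - (if v = exv \<alpha> \<and> b = snd \<alpha> then cc \<alpha> x else 0))"
    using I v unfolding Inv_def by auto
  show "cone v b (\<lambda>x. d x + cc \<beta> x - (if v = exv \<beta> \<and> b = snd \<beta> then cc \<beta> x else 0))"
    by (rule cone_cong[rotated], rule cone_add[OF c1 H[OF v]]) auto
next
  fix v assume v: "v \<in> V"
  have "excess d v = (if v = exv \<alpha> then 1 else 0) - (if v = s then 1 else 0)"
    using I v unfolding Inv_def by auto
  then show "excess (\<lambda>x. d x + cc \<beta> x) v = (if v = exv \<beta> then 1 else 0) - (if v = s then 1 else 0)"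
    unfolding excess_add using excess_cc[OF bE, of v] en by auto
qed

lemma R_inv: "(e0, b0) \<in> R \<Longrightarrow> \<exists>d. Inv (e0, b0) d"
proof (induction rule: R.induct)
  case (st_p e)
  have "Inv (e, True) (cc (e, True))"
    unfolding Inv_def
  proof (intro conjI ballI allI impI)
    fix x assume "x \<in> E" "cc (e, True) x < 0" then show "\<phi> x > 0" by (auto simp: cc_def split: if_splits)
  next
    fix v b assume v: "v \<in> V"
    show "cone v b (\<lambda>x. cc (e, True) x - (if v = exv (e, True) \<and> b = snd (e, True) then cc (e, True) x else 0))"
    proof (cases "v = exv (e, True) \<and> b = snd (e, True)")
      case True then show ?thesis by (simp add: cone_nonpos)
    next
      case False
      have "cone v b (\<lambda>x. if v = exv (e, True) \<and> b = snd (e, True) then 0 else cc (e, True) x)"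
        by (rule cone_beta) (use st_p in \<open>auto simp: env_def out_edges_def\<close>)
      then show ?thesis by (rule cone_cong[rotated]) (use False in auto)
    qed
  next
    fix v assume "v \<in> V"
    have "e \<in> E" using st_p by (auto simp: out_edges_def)
    then show "excess (cc (e, True)) v = (if v = exv (e, True) then 1 else 0) - (if v = s then 1 else 0)"
      using excess_cc[of "(e, True)" v] st_p by (auto simp: env_def out_edges_def)
  qed
  then show ?case by blast
next
  case (st_m e)
  have "Inv (e, False) (cc (e, False))"
    unfolding Inv_def
  proof (intro conjI ballI allI impI)
    fix x assume "x \<in> E" "cc (e, False) x < 0" then show "\<phi> x > 0" using st_m by (auto simp: cc_def split: if_splits)
  next
    fix v b assume v: "v \<in> V"
    show "cone v b (\<lambda>x. cc (e, False) x - (if v = exv (e, False) \<and> b = snd (e, False) then cc (e, False) x else 0))"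
      by (rule cone_nonpos) (auto simp: cc_def)
  next
    fix v assume "v \<in> V"
    have "e \<in> E" using st_m by (auto simp: in_edges_def)
    then show "excess (cc (e, False)) v = (if v = exv (e, False) then 1 else 0) - (if v = s then 1 else 0)"
      using excess_cc[of "(e, False)" v] st_m by (auto simp: env_def in_edges_def)
  qed
  then show ?case by blast
next
  case (t1i e e')
  then obtain d where I: "Inv (e, True) d" by blast
  have "Inv (e', False) (\<lambda>x. d x + cc (e', False) x)"
  proof (rule inv_step[OF I])
    show "fst (e', False) \<in> E" using t1i by (auto simp: in_edges_def)
    show "\<not> snd (e', False) \<Longrightarrow> 0 < \<phi> (fst (e', False))" using t1i by auto
    show "env (e', False) = exv (e, True)" using t1i by (auto simp: env_def exv_def in_edges_def)
    fix v b assume v: "v \<in> V"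
    show "cone v b (\<lambda>x. (if v = exv (e, True) \<and> b = snd (e, True) then cc (e, True) x else 0) +
             (if v = exv (e', False) \<and> b = snd (e', False) then 0 else cc (e', False) x))"
    proof (cases "v = exv (e, True) \<and> b = snd (e, True)")
      case True
      have "cone v b (\<lambda>x. (if x = e then 1 else 0) + (if x = e' then -1 else 0))"
        by (rule cone_exch) (use t1i True in \<open>auto simp: exv_def\<close>)
      then show ?thesis by (rule cone_cong[rotated]) (use True in \<open>auto simp: cc_def\<close>)
    next
      case False
      have "cone v b (\<lambda>x. if v = exv (e', False) \<and> b = snd (e', False) then 0 else cc (e', False) x)"
        by (rule cone_beta) auto
      then show ?thesis by (rule cone_cong[rotated]) (use False in auto)
    qed
  qed
  then show ?case by blast
next
  case (t1o e e')
  then obtain d where I: "Inv (e, False) d" by blast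
  have "Inv (e', True) (\<lambda>x. d x + cc (e', True) x)"
  proof (rule inv_step[OF I])
    show "fst (e', True) \<in> E" using t1o by (auto simp: out_edges_def)
    show "\<not> snd (e', True) \<Longrightarrow> 0 < \<phi> (fst (e', True))" by auto
    show "env (e', True) = exv (e, False)" using t1o by (auto simp: env_def exv_def out_edges_def)
    fix v b assume v: "v \<in> V"
    show "cone v b (\<lambda>x. (if v = exv (e, False) \<and> b = snd (e, False) then cc (e, False) x else 0) +
             (if v = exv (e', True) \<and> b = snd (e', True) then 0 else cc (e', True) x))"
    proof (cases "v = exv (e, False) \<and> b = snd (e, False)")
      case True
      have "cone v b (\<lambda>x. (if x = e' then 1 else 0) + (if x = e then -1 else 0))"
        by (rule cone_exch) (use t1o True in \<open>auto simp: exv_def\<close>)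
      then show ?thesis by (rule cone_cong[rotated]) (use True in \<open>auto simp: cc_def\<close>)
    next
      case False
      have "cone v b (\<lambda>x. if v = exv (e', True) \<and> b = snd (e', True) then 0 else cc (e', True) x)"
        by (rule cone_beta) (use False t1o in \<open>auto simp: env_def exv_def out_edges_def\<close>)
      then show ?thesis by (rule cone_cong[rotated]) (use False in auto)
    qed
  qed
  then show ?case by blast
next
  case (t2 e e')
  then obtain d where I: "Inv (e, True) d" by blast
  have "Inv (e', True) (\<lambda>x. d x + cc (e', True) x)"
  proof (rule inv_step[OF I])
    show "fst (e', True) \<in> E" using t2 by (auto simp: out_edges_def)
    show "\<not> snd (e', True) \<Longrightarrow> 0 < \<phi> (fst (e', True))" by auto
    show "env (e', True) = exv (e, True)" using t2 by (auto simp: env_def exv_def out_edges_def)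
    fix v b assume v: "v \<in> V"
    have c1: "cone v b (\<lambda>x. if v = exv (e, True) \<and> b = snd (e, True) then cc (e, True) x else 0)"
      by (rule cone_alpha) (use t2 in \<open>auto simp: exv_def\<close>)
    have c2: "cone v b (\<lambda>x. if v = exv (e', True) \<and> b = snd (e', True) then 0 else cc (e', True) x)"
      by (rule cone_beta) (use t2 in \<open>auto simp: env_def out_edges_def\<close>)
    show "cone v b (\<lambda>x. (if v = exv (e, True) \<and> b = snd (e, True) then cc (e, True) x else 0) +
             (if v = exv (e', True) \<and> b = snd (e', True) then 0 else cc (e', True) x))"
      using cone_add[OF c1 c2] .
  qed
  then show ?case by blast
next
  case (t3 e e')
  then obtain d where I: "Inv (e, False) d" by blast
  have "Inv (e', False) (\<lambda>x. d x + cc (e', False) x)"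
  proof (rule inv_step[OF I])
    show "fst (e', False) \<in> E" using t3 by (auto simp: in_edges_def)
    show "\<not> snd (e', False) \<Longrightarrow> 0 < \<phi> (fst (e', False))" using t3 by auto
    show "env (e', False) = exv (e, False)" using t3 by (auto simp: env_def exv_def in_edges_def)
    fix v b assume v: "v \<in> V"
    show "cone v b (\<lambda>x. (if v = exv (e, False) \<and> b = snd (e, False) then cc (e, False) x else 0) +
             (if v = exv (e', False) \<and> b = snd (e', False) then 0 else cc (e', False) x))"
      by (rule cone_nonpos) (auto simp: cc_def)
  qed
  then show ?case by blast
qed


lemma tendsto_lin: "((\<lambda>\<epsilon>::real. c + \<epsilon> * k) \<longlongrightarrow> c) (at_right 0)"
proof -
  have "((\<lambda>\<epsilon>::real. c + \<epsilon> * k) \<longlongrightarrow> c + 0 * k) (at_right 0)"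
    by (intro tendsto_intros)
  then show ?thesis by simp
qed

lemma improve:
  assumes inR: "(e, b) \<in> R" and I: "Inv (e, b) d" and ex: "exv (e, b) = t" and fr: "b \<Longrightarrow> free t True e"
  shows "\<exists>\<psi>. flow \<psi> \<and> flow_value E s \<psi> > flow_value E s \<phi>"
proof -
  have dneg: "\<And>x. x \<in> E \<Longrightarrow> d x < 0 \<Longrightarrow> \<phi> x > 0" using I unfolding Inv_def by auto
  have exc: "\<And>v. v \<in> V \<Longrightarrow> excess d v = (if v = t then 1 else 0) - (if v = s then 1 else 0)"
    using I ex unfolding Inv_def by auto
  have coneall: "\<And>v b'. v \<in> V \<Longrightarrow> cone v b' d"
  proof -
    fix v b' assume v: "v \<in> V"
    have c1: "cone v b' (\<lambda>x. d x - (if v = exv (e, b) \<and> b' = snd (e, b) then cc (e, b) x else 0))"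
      using I v unfolding Inv_def by auto
    have c2: "cone v b' (\<lambda>x. if v = exv (e, b) \<and> b' = snd (e, b) then cc (e, b) x else 0)"
      by (rule cone_alpha) (use fr ex in auto)
    show "cone v b' d" by (rule cone_cong[rotated], rule cone_add[OF c1 c2]) auto
  qed
  define K where "K = {(v, b', A). v \<in> V \<and> A \<subseteq> G v b'}"
  have finK: "finite K"
  proof -
    have "K \<subseteq> V \<times> UNIV \<times> Pow E" unfolding K_def using G_sub by auto
    moreover have "finite (V \<times> (UNIV::bool set) \<times> Pow E)" using finV finE by auto
    ultimately show ?thesis by (rule finite_subset)
  qed
  have ev0: "\<forall>\<^sub>F \<epsilon> in at_right (0::real). 0 < \<epsilon>" by (rule eventually_at_right_less)
  have ev1: "\<forall>\<^sub>F \<epsilon> in at_right (0::real). \<forall>x\<in>E. 0 \<le> \<phi> x + \<epsilon> * d x"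
  proof (rule eventually_ball_finite[OF finE], rule ballI)
    fix x assume xE: "x \<in> E"
    show "\<forall>\<^sub>F \<epsilon> in at_right (0::real). 0 \<le> \<phi> x + \<epsilon> * d x"
    proof (cases "d x < 0")
      case True
      then have "\<phi> x > 0" using dneg xE by auto
      then have "\<forall>\<^sub>F \<epsilon> in at_right (0::real). 0 < \<phi> x + \<epsilon> * d x"
        using order_tendstoD(1)[OF tendsto_lin] by blast
      then show ?thesis by (rule eventually_mono) auto
    next
      case False
      have "\<phi> x \<ge> 0" using flow_nn[OF fl xE] .
      then show ?thesis using ev0 False by (rule_tac eventually_mono[OF ev0]) auto
    qed
  qed
  have ev2: "\<forall>\<^sub>F \<epsilon> in at_right (0::real). \<forall>k\<in>K. sum \<phi> (snd (snd k)) + \<epsilon> * sum d (snd (snd k)) \<le> f (snd (snd k))"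
  proof (rule eventually_ball_finite[OF finK], rule ballI)
    fix k assume "k \<in> K"
    then obtain v b' A where k: "k = (v, b', A)" and v: "v \<in> V" and A: "A \<subseteq> G v b'" unfolding K_def by auto
    show "\<forall>\<^sub>F \<epsilon> in at_right (0::real). sum \<phi> (snd (snd k)) + \<epsilon> * sum d (snd (snd k)) \<le> f (snd (snd k))"
    proof (cases "tight A")
      case True
      then have "sum d A \<le> 0" using coneall[OF v] A unfolding cone_def by auto
      moreover have "sum \<phi> A = f A" using True by (simp add: tight_def)
      ultimately show ?thesis using k by (rule_tac eventually_mono[OF ev0]) (auto simp: mult_nonneg_nonpos)
    next
      case False
      then have "sum \<phi> A < f A" using flow_cap[OF fl v A] by (auto simp: tight_def)
      then have "\<forall>\<^sub>F \<epsilon> in at_right (0::real). sum \<phi> A + \<epsilon> * sum d A < f A"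
        using order_tendstoD(2)[OF tendsto_lin] by blast
      then show ?thesis using k by (auto elim: eventually_mono)
    qed
  qed
  have "\<forall>\<^sub>F \<epsilon> in at_right (0::real). 0 < \<epsilon> \<and> (\<forall>x\<in>E. 0 \<le> \<phi> x + \<epsilon> * d x) \<and>
          (\<forall>k\<in>K. sum \<phi> (snd (snd k)) + \<epsilon> * sum d (snd (snd k)) \<le> f (snd (snd k)))"
    using eventually_conj[OF ev0 eventually_conj[OF ev1 ev2]] by simp
  then obtain \<epsilon> where eps: "0 < \<epsilon>" and P1: "\<forall>x\<in>E. 0 \<le> \<phi> x + \<epsilon> * d x"
    and P2: "\<forall>k\<in>K. sum \<phi> (snd (snd k)) + \<epsilon> * sum d (snd (snd k)) \<le> f (snd (snd k))"
    using eventually_happens'[OF trivial_limit_at_right_real] by blast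
  define \<psi> where "\<psi> = (\<lambda>x. \<phi> x + \<epsilon> * d x)"
  have sp: "\<And>A. sum \<psi> A = sum \<phi> A + \<epsilon> * sum d A"
    unfolding \<psi>_def by (simp add: sum.distrib sum_distrib_left)
  have capK: "\<And>v b' A. v \<in> V \<Longrightarrow> A \<subseteq> G v b' \<Longrightarrow> sum \<psi> A \<le> f A"
  proof -
    fix v b' A assume "v \<in> V" "A \<subseteq> G v b'"
    then have "(v, b', A) \<in> K" unfolding K_def by auto
    then show "sum \<psi> A \<le> f A" using P2 sp by fastforce
  qed
  have "flow \<psi>"
    unfolding is_polymatroidal_flow_def
  proof (intro conjI ballI allI impI)
    fix x assume "x \<in> E" then show "0 \<le> \<psi> x" using P1 by (simp add: \<psi>_def)
  next
    fix v assume v: "v \<in> V - {s, t}"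
    then have "excess d v = 0" using exc by auto
    moreover have "sum \<phi> (in_edges E v) = sum \<phi> (out_edges E v)" using fl v unfolding is_polymatroidal_flow_def by auto
    ultimately show "sum \<psi> (in_edges E v) = sum \<psi> (out_edges E v)" by (simp add: sp excess_def)
  next
    fix v A assume "v \<in> V" "A \<subseteq> in_edges E v"
    then show "sum \<psi> A \<le> f A" using capK[of v A True] by (simp add: G_def)
  next
    fix v A assume "v \<in> V" "A \<subseteq> out_edges E v"
    then show "sum \<psi> A \<le> f A" using capK[of v A False] by (simp add: G_def)
  qed
  moreover have "flow_value E s \<psi> = flow_value E s \<phi> + \<epsilon>"
  proof -
    have "excess d s = -1" using exc[OF sV] st by auto
    then have "sum d (out_edges E s) = 1 + sum d (in_edges E s)" unfolding excess_def by simp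
    then show ?thesis unfolding flow_value_def sp by (simp add: algebra_simps)
  qed
  ultimately show ?thesis using eps by auto
qed


lemma exch_of_free: "free v b e \<Longrightarrow> exch v b e x"
  unfolding free_def exch_def by auto

lemma R_Tail:
  assumes "(x, b) \<in> R" "b"
  shows "fst x = s \<or> (\<exists>e. (e, False) \<in> R \<and> fst x = fst e) \<or> (\<exists>e. (e, True) \<in> R \<and> free (snd e) True e \<and> fst x = snd e)"
  using assms by (induction rule: R.induct) (auto simp: out_edges_def)

lemma R_True_cases:
  assumes "(x, True) \<in> R"
  shows "(x \<in> out_edges E s \<and> free s False x) \<or>
         (\<exists>e. (e, False) \<in> R \<and> x \<in> out_edges E (fst e) \<and> exch (fst e) False x e) \<or>
         (\<exists>e. (e, True) \<in> R \<and> free (snd e) True e \<and> x \<in> out_edges E (snd e) \<and> free (snd e) False x)"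
  using assms by (cases rule: R.cases) auto

lemma cut_exists:
  assumes noend: "\<And>e b. (e, b) \<in> R \<Longrightarrow> exv (e, b) = t \<Longrightarrow> (b \<Longrightarrow> free t True e) \<Longrightarrow> False"
  shows "\<exists>C. is_st_cut E s t C \<and> f_pf f V C \<le> flow_value E s \<phi>"
proof -
  define S where "S = {s} \<union> {fst e | e. (e, False) \<in> R} \<union> {snd e | e. (e, True) \<in> R \<and> free (snd e) True e}"
  have SV: "S \<subseteq> V"
    unfolding S_def using sV R_E EV by fastforce
  have sS: "s \<in> S" unfolding S_def by auto
  have tS: "t \<notin> S"
  proof
    assume "t \<in> S"
    then consider "t = s" | e where "(e, False) \<in> R" "t = fst e" | e where "(e, True) \<in> R" "free (snd e) True e" "t = snd e"
      unfolding S_def by auto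
    then show False
    proof cases
      case 1 then show ?thesis using st by auto
    next
      case 2 then show ?thesis using noend[of e False] by (auto simp: exv_def)
    next
      case 3 then show ?thesis using noend[of e True] by (auto simp: exv_def)
    qed
  qed
  have Sm: "\<And>v x. v \<in> S \<Longrightarrow> x \<in> in_edges E v \<Longrightarrow> \<phi> x > 0 \<Longrightarrow> (x, False) \<in> R"
  proof -
    fix v x assume vS: "v \<in> S" and x: "x \<in> in_edges E v" and px: "\<phi> x > 0"
    from vS consider "v = s" | e where "(e, False) \<in> R" "v = fst e" | e where "(e, True) \<in> R" "free (snd e) True e" "v = snd e"
      unfolding S_def by auto
    then show "(x, False) \<in> R"
    proof cases
      case 1 then show ?thesis using R.st_m x px by auto
    next
      case 2 then show ?thesis using R.t3 x px by auto
    next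
      case 3 then show ?thesis using R.t1i[of e x] x px exch_of_free by auto
    qed
  qed
  have Sp: "\<And>v x. v \<in> S \<Longrightarrow> x \<in> out_edges E v \<Longrightarrow> free v False x \<Longrightarrow> (x, True) \<in> R"
  proof -
    fix v x assume vS: "v \<in> S" and x: "x \<in> out_edges E v" and fx: "free v False x"
    from vS consider "v = s" | e where "(e, False) \<in> R" "v = fst e" | e where "(e, True) \<in> R" "free (snd e) True e" "v = snd e"
      unfolding S_def by auto
    then show "(x, True) \<in> R"
    proof cases
      case 1 then show ?thesis using R.st_p x fx by auto
    next
      case 2 then show ?thesis using R.t1o[of e x] x fx exch_of_free by auto
    next
      case 3 then show ?thesis using R.t2[of e x] x fx by auto
    qed
  qed
  have tailS: "\<And>x. (x, True) \<in> R \<Longrightarrow> fst x \<in> S"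
    using R_Tail unfolding S_def by blast
  have tailSm: "\<And>x. (x, False) \<in> R \<Longrightarrow> fst x \<in> S"
    unfolding S_def by blast
  define W where "W b = {x \<in> in_edges E b. \<exists>e0. (e0, True) \<in> R \<and> snd e0 = b \<and> exch b True e0 x}" for b
  define \<sigma> where "\<sigma> e = (if e \<in> W (snd e) then snd e else fst e)" for e
  define C where "C = {e\<in>E. fst e \<in> S \<and> snd e \<notin> S}"
  define X where "X a = {e \<in> out_edges E a. snd e \<notin> S \<and> e \<notin> W (snd e)}" for a
  have CE: "C \<subseteq> E" unfolding C_def by auto
  have nfree_in: "\<And>e0. (e0, True) \<in> R \<Longrightarrow> snd e0 \<notin> S \<Longrightarrow> \<not> free (snd e0) True e0"
    unfolding S_def by blast
  have W_C: "\<And>b x. b \<notin> S \<Longrightarrow> x \<in> W b \<Longrightarrow> fst x \<in> S"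
  proof -
    fix b x assume bS: "b \<notin> S" and x: "x \<in> W b"
    then obtain e0 where e0: "(e0, True) \<in> R" "snd e0 = b" "exch b True e0 x" and xin: "x \<in> in_edges E b"
      unfolding W_def by auto
    show "fst x \<in> S"
    proof (cases "x = e0")
      case True then show ?thesis using tailS e0 by auto
    next
      case False
      have bV: "b \<in> V" using R_E[OF e0(1)] e0(2) EV by auto
      have nf: "\<not> free b True e0" using nfree_in[OF e0(1)] e0(2) bS by auto
      have "x \<in> D b True e0" using xin e0 by (auto simp: D_def G_def)
      then have "\<phi> x > 0" using D_pos[OF bV nf] False by auto
      then have "(x, False) \<in> R" using R.t1i[OF e0(1), of x] xin e0 by auto
      then show ?thesis using tailSm by auto
    qed
  qed
  have W_tight: "\<And>b. b \<in> V \<Longrightarrow> b \<notin> S \<Longrightarrow> tight (W b)"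
  proof -
    fix b assume bV: "b \<in> V" and bS: "b \<notin> S"
    define P where "P = {e0 \<in> in_edges E b. (e0, True) \<in> R}"
    have finP: "finite P" unfolding P_def using fin_sub[of "{e0 \<in> in_edges E b. (e0, True) \<in> R}"] by (auto simp: in_edges_def)
    have nfP: "\<And>e0. e0 \<in> P \<Longrightarrow> \<not> free b True e0"
      using nfree_in bS unfolding P_def in_edges_def by auto
    have eq: "W b = (\<Union>e0\<in>P. D b True e0)"
    proof
      show "W b \<subseteq> (\<Union>e0\<in>P. D b True e0)"
      proof
        fix x assume "x \<in> W b"
        then obtain e0 where e0: "(e0, True) \<in> R" "snd e0 = b" "exch b True e0 x" and xin: "x \<in> in_edges E b"
          unfolding W_def by auto
        have "e0 \<in> P" using e0 R_E[OF e0(1)] unfolding P_def in_edges_def by auto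
        moreover have "x \<in> D b True e0" using xin e0 by (auto simp: D_def G_def)
        ultimately show "x \<in> (\<Union>e0\<in>P. D b True e0)" by auto
      qed
    next
      show "(\<Union>e0\<in>P. D b True e0) \<subseteq> W b"
        unfolding W_def P_def D_def G_def in_edges_def by auto
    qed
    have "tight (\<Union>e0\<in>P. D b True e0)"
      by (rule tight_Union[OF bV finP, where b=True]) (use D_tight[OF bV nfP] in auto)
    then show "tight (W b)" using eq by simp
  qed
  have keyT: "\<And>a e e'. a \<in> V \<Longrightarrow> e \<in> out_edges E a \<Longrightarrow> \<not> free a False e \<Longrightarrow> e' \<in> D a False e \<Longrightarrow> (e', True) \<in> R \<Longrightarrow> (e, True) \<in> R"
  proof -
    fix a e e' assume aV: "a \<in> V" and eo: "e \<in> out_edges E a" and nf: "\<not> free a False e"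
      and e'D: "e' \<in> D a False e" and e'R: "(e', True) \<in> R"
    have e'o: "e' \<in> out_edges E a" and exee': "exch a False e e'" using e'D by (auto simp: D_def G_def)
    have nfe': "\<not> free a False e'"
      using D_tight[OF aV nf] e'D unfolding free_def by blast
    from R_True_cases[OF e'R] show "(e, True) \<in> R"
    proof (elim disjE exE conjE)
      assume "e' \<in> out_edges E s" "free s False e'"
      then show ?thesis using nfe' e'o by (auto simp: out_edges_def)
    next
      fix e1 assume e1: "(e1, False) \<in> R" "e' \<in> out_edges E (fst e1)" "exch (fst e1) False e' e1"
      then have fa: "fst e1 = a" using e'o by (auto simp: out_edges_def)
      have "exch a False e e1" using exee' e1(3) fa unfolding exch_def by blast
      then show ?thesis using R.t1o[OF e1(1), of e] eo fa by auto
    next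
      fix e1 assume "(e1, True) \<in> R" "free (snd e1) True e1" "e' \<in> out_edges E (snd e1)" "free (snd e1) False e'"
      then show ?thesis using nfe' e'o by (auto simp: out_edges_def)
    qed
  qed
  have X_tight: "\<And>a. a \<in> V \<Longrightarrow> a \<in> S \<Longrightarrow> tight (X a)"
  proof -
    fix a assume aV: "a \<in> V" and aS: "a \<in> S"
    have eW: "\<And>e. (e, True) \<in> R \<Longrightarrow> e \<in> W (snd e)"
    proof -
      fix e assume eR: "(e, True) \<in> R"
      have "e \<in> E" using R_E[OF eR] .
      moreover have "exch (snd e) True e e" unfolding exch_def by auto
      ultimately show "e \<in> W (snd e)" unfolding W_def in_edges_def using eR by blast
    qed
    have nfX: "\<And>e. e \<in> X a \<Longrightarrow> \<not> free a False e"
    proof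
      fix e assume eX: "e \<in> X a" and fr: "free a False e"
      then have "(e, True) \<in> R" using Sp[OF aS] unfolding X_def by auto
      then show False using eW[of e] eX unfolding X_def by blast
    qed
    have DX: "\<And>e. e \<in> X a \<Longrightarrow> D a False e \<subseteq> X a"
    proof
      fix e e' assume eX: "e \<in> X a" and e'D: "e' \<in> D a False e"
      have nf: "\<not> free a False e" using nfX[OF eX] .
      have eo: "e \<in> out_edges E a" using eX unfolding X_def by auto
      have e'o: "e' \<in> out_edges E a" and exee': "exch a False e e'" using e'D by (auto simp: D_def G_def)
      have notR: "(e, True) \<notin> R" using eW[of e] eX unfolding X_def by blast
      show "e' \<in> X a"
      proof (cases "e' = e")
        case True then show ?thesis using eX by simp
      next
        case False
        have pe': "\<phi> e' > 0" using D_pos[OF aV nf e'D False] .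
        have claim1: "(e', False) \<notin> R"
        proof
          assume "(e', False) \<in> R"
          then have "(e, True) \<in> R" using R.t1o[of e' e] eo e'o exee' by (auto simp: out_edges_def)
          then show False using notR by simp
        qed
        have "snd e' \<notin> S"
        proof
          assume "snd e' \<in> S"
          then have "(e', False) \<in> R" using Sm[of "snd e'" e'] pe' e'o by (auto simp: in_edges_def out_edges_def)
          then show False using claim1 by simp
        qed
        moreover have "e' \<notin> W (snd e')"
        proof
          assume "e' \<in> W (snd e')"
          then obtain e0 where e0: "(e0, True) \<in> R" "snd e0 = snd e'" "exch (snd e') True e0 e'" and xin: "e' \<in> in_edges E (snd e')"
            unfolding W_def by auto
          show False
          proof (cases "e' = e0")
            case True
            then have "(e, True) \<in> R" using keyT[OF aV eo nf e'D] e0 by auto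
            then show False using notR by simp
          next
            case False
            then have "(e', False) \<in> R" using R.t1i[OF e0(1), of e'] xin e0 pe' by auto
            then show False using claim1 by simp
          qed
        qed
        ultimately show ?thesis using e'o unfolding X_def by auto
      qed
    qed
    have eq: "X a = (\<Union>e\<in>X a. D a False e)"
    proof
      show "X a \<subseteq> (\<Union>e\<in>X a. D a False e)" using D_tight(2)[OF aV nfX] by auto
      show "(\<Union>e\<in>X a. D a False e) \<subseteq> X a" using DX by auto
    qed
    have finX: "finite (X a)" using fin_sub[of "X a"] unfolding X_def out_edges_def by auto
    have "tight (\<Union>e\<in>X a. D a False e)"
      by (rule tight_Union[OF aV finX, where b=False]) (use D_tight[OF aV nfX] in auto)
    then show "tight (X a)" using eq by simp
  qed
  have asg: "edge_assignment C \<sigma>" unfolding edge_assignment_def \<sigma>_def by auto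
  have Cv: "\<And>v. v \<in> V \<Longrightarrow> {e \<in> C. \<sigma> e = v} = (if v \<in> S then X v else W v)"
  proof -
    fix v assume vV: "v \<in> V"
    show "{e \<in> C. \<sigma> e = v} = (if v \<in> S then X v else W v)"
    proof (cases "v \<in> S")
      case True
      have "{e \<in> C. \<sigma> e = v} = X v"
      proof
        show "{e \<in> C. \<sigma> e = v} \<subseteq> X v"
          using True unfolding C_def \<sigma>_def X_def out_edges_def by (auto split: if_splits)
        show "X v \<subseteq> {e \<in> C. \<sigma> e = v}"
          using True unfolding C_def \<sigma>_def X_def out_edges_def by auto
      qed
      then show ?thesis using True by simp
    next
      case False
      have "{e \<in> C. \<sigma> e = v} = W v"
      proof
        show "{e \<in> C. \<sigma> e = v} \<subseteq> W v"
          using False unfolding C_def \<sigma>_def by (auto split: if_splits)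
        show "W v \<subseteq> {e \<in> C. \<sigma> e = v}"
        proof
          fix x assume x: "x \<in> W v"
          then have "x \<in> in_edges E v" unfolding W_def by auto
          then show "x \<in> {e \<in> C. \<sigma> e = v}"
            using W_C[OF False x] False x unfolding C_def \<sigma>_def in_edges_def by auto
        qed
      qed
      then show ?thesis using False by simp
    qed
  qed
  have "(\<Sum>v\<in>V. f {e \<in> C. \<sigma> e = v}) = (\<Sum>v\<in>V. sum \<phi> {e \<in> C. \<sigma> e = v})"
  proof (rule sum.cong)
    fix v assume vV: "v \<in> V"
    have "tight {e \<in> C. \<sigma> e = v}" using Cv[OF vV] X_tight[OF vV] W_tight[OF vV] by auto
    then show "f {e \<in> C. \<sigma> e = v} = sum \<phi> {e \<in> C. \<sigma> e = v}" by (simp add: tight_def)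
  qed simp
  also have "\<dots> = sum \<phi> C"
  proof -
    have "(\<Sum>v\<in>V. sum \<phi> {e. e \<in> C \<and> \<sigma> e = v}) = sum \<phi> C"
    proof (rule sum.group)
      show "finite C" using fin_sub[OF CE] .
      show "finite V" using finV .
      show "\<sigma> ` C \<subseteq> V" using CE EV unfolding \<sigma>_def by auto
    qed
    then show ?thesis by simp
  qed
  also have "\<dots> = flow_value E s \<phi>"
  proof -
    have "sum \<phi> {e\<in>E. fst e \<notin> S \<and> snd e \<in> S} = 0"
    proof (rule sum.neutral, rule ballI)
      fix x assume x: "x \<in> {e\<in>E. fst e \<notin> S \<and> snd e \<in> S}"
      have "\<not> \<phi> x > 0"
      proof
        assume "\<phi> x > 0"
        then have "(x, False) \<in> R" using Sm[of "snd x" x] x by (auto simp: in_edges_def)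
        then show False using tailSm x by auto
      qed
      moreover have "\<phi> x \<ge> 0" using flow_nn[OF fl] x by auto
      ultimately show "\<phi> x = 0" by linarith
    qed
    then show ?thesis using value_cut[OF fl SV sS tS] unfolding C_def by simp
  qed
  finally have val: "(\<Sum>v\<in>V. f {e \<in> C. \<sigma> e = v}) = flow_value E s \<phi>" .
  have cut: "is_st_cut E s t C"
  proof -
    have "\<And>y. (s, y) \<in> (E - C)\<^sup>* \<Longrightarrow> y \<in> S"
    proof -
      fix y assume "(s, y) \<in> (E - C)\<^sup>*"
      then show "y \<in> S"
      proof (induction rule: rtrancl_induct)
        case base then show ?case using sS .
      next
        case (step y z)
        then show ?case unfolding C_def by auto
      qed
    qed
    then show ?thesis unfolding is_st_cut_def using CE tS by auto
  qed
  show ?thesis using cut fpf_le[OF CE asg] val by auto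
qed

end


context PF
begin

lemma closedin_constraints:
  assumes "\<And>i. i \<in> I \<Longrightarrow> continuous_map X euclideanreal (g i)" "\<And>i. i \<in> I \<Longrightarrow> closed (Cs i)"
  shows "closedin X {x \<in> topspace X. \<forall>i\<in>I. g i x \<in> Cs i}"
proof (cases "I = {}")
  case True then show ?thesis by simp
next
  case False
  have eq: "{x \<in> topspace X. \<forall>i\<in>I. g i x \<in> Cs i} = (\<Inter>i\<in>I. {x \<in> topspace X. g i x \<in> Cs i})"
    using False by blast
  have cl: "\<And>i. i \<in> I \<Longrightarrow> closedin X {x \<in> topspace X. g i x \<in> Cs i}"
  proof -
    fix i assume i: "i \<in> I"
    have "closedin euclideanreal (Cs i)" using assms(2)[OF i] closed_closedin by blast
    then show "closedin X {x \<in> topspace X. g i x \<in> Cs i}"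
      by (rule closedin_continuous_map_preimage[OF assms(1)[OF i]])
  qed
  show ?thesis unfolding eq
    by (rule closedin_Inter) (use False cl in auto)
qed

lemma cont_sum:
  assumes "A \<subseteq> E"
  shows "continuous_map (product_topology (\<lambda>_. euclideanreal) E) euclideanreal (\<lambda>\<phi>. sum \<phi> A)"
proof -
  have "continuous_map (product_topology (\<lambda>_. euclideanreal) E) euclidean (\<lambda>\<phi>. \<Sum>e\<in>A. \<phi> e)"
  proof (rule continuous_map_sum)
    show "finite A" using fin_sub[OF assms] .
    fix i assume "i \<in> A"
    then have "i \<in> E" using assms by blast
    then have "continuous_map (product_topology (\<lambda>_. euclideanreal) E) ((\<lambda>_. euclideanreal) i) (\<lambda>x. x i)"
      by (rule continuous_map_product_projection)
    then show "continuous_map (product_topology (\<lambda>_. euclideanreal) E) euclidean (\<lambda>x. x i)" by simp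
  qed
  then show ?thesis by simp
qed

lemma flow_restrict:
  assumes "flow \<psi>"
  shows "flow (restrict \<psi> E)" "flow_value E s (restrict \<psi> E) = flow_value E s \<psi>"
proof -
  have sr: "\<And>A. A \<subseteq> E \<Longrightarrow> sum (restrict \<psi> E) A = sum \<psi> A"
    by (rule sum.cong) auto
  have ie: "\<And>v. in_edges E v \<subseteq> E" "\<And>v. out_edges E v \<subseteq> E" by (auto simp: in_edges_def out_edges_def)
  show "flow (restrict \<psi> E)"
    unfolding is_polymatroidal_flow_def
  proof (intro conjI ballI allI impI)
    fix e assume "e \<in> E" then show "0 \<le> restrict \<psi> E e" using flow_nn[OF assms] by simp
  next
    fix v assume "v \<in> V - {s, t}"
    then show "sum (restrict \<psi> E) (in_edges E v) = sum (restrict \<psi> E) (out_edges E v)"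
      using assms sr[OF ie(1)] sr[OF ie(2)] unfolding is_polymatroidal_flow_def by auto
  next
    fix v A assume "v \<in> V" "A \<subseteq> in_edges E v"
    moreover then have "A \<subseteq> E" using ie(1) by blast
    ultimately show "sum (restrict \<psi> E) A \<le> f A"
      using assms sr unfolding is_polymatroidal_flow_def by auto
  next
    fix v A assume "v \<in> V" "A \<subseteq> out_edges E v"
    moreover then have "A \<subseteq> E" using ie(2) by blast
    ultimately show "sum (restrict \<psi> E) A \<le> f A"
      using assms sr unfolding is_polymatroidal_flow_def by auto
  qed
  show "flow_value E s (restrict \<psi> E) = flow_value E s \<psi>"
    unfolding flow_value_def using sr ie by simp
qed

lemma flow_bound:
  assumes "flow \<psi>" "e \<in> E"
  shows "\<psi> e \<le> sum (\<lambda>e. f {e}) E"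
proof -
  have "snd e \<in> V" using assms(2) EV by auto
  moreover have "{e} \<subseteq> G (snd e) True" using assms(2) by (auto simp: G_def in_edges_def)
  ultimately have "sum \<psi> {e} \<le> f {e}" using flow_cap[OF assms(1)] by blast
  also have "f {e} \<le> sum (\<lambda>e. f {e}) E"
    by (rule member_le_sum) (use assms(2) finE nonneg in auto)
  finally show ?thesis by simp
qed

lemma max_flow_exists:
  "\<exists>\<phi>. flow \<phi> \<and> (\<forall>\<psi>. flow \<psi> \<longrightarrow> flow_value E s \<psi> \<le> flow_value E s \<phi>)"
proof -
  define X where "X = product_topology (\<lambda>_::('v \<times> 'v). euclideanreal) E"
  define B where "B = sum (\<lambda>e. f {e}) E"
  define Kc where "Kc = {(v, b, A). v \<in> V \<and> A \<subseteq> G v b}"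
  define K where "K = {\<phi> \<in> topspace X. flow \<phi> \<and> (\<forall>e\<in>E. \<phi> e \<le> B)}"
  define K1 where "K1 = {\<phi> \<in> topspace X. \<forall>e\<in>E. (\<lambda>\<phi>. \<phi> e) \<phi> \<in> {0..B}}"
  define K2 where "K2 = {\<phi> \<in> topspace X. \<forall>k\<in>Kc. (\<lambda>\<phi>. sum \<phi> (snd (snd k))) \<phi> \<in> {..f (snd (snd k))}}"
  define K3 where "K3 = {\<phi> \<in> topspace X. \<forall>v\<in>V-{s,t}. (\<lambda>\<phi>. sum \<phi> (in_edges E v) - sum \<phi> (out_edges E v)) \<phi> \<in> {0}}"
  have top: "topspace X = PiE E (\<lambda>_. UNIV)" unfolding X_def by simp
  have KK: "K = K1 \<inter> K2 \<inter> K3"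
  proof (intro set_eqI iffI)
    fix \<phi> assume "\<phi> \<in> K"
    then have tp: "\<phi> \<in> topspace X" and fl: "flow \<phi>" and bd: "\<forall>e\<in>E. \<phi> e \<le> B" unfolding K_def by auto
    have "\<phi> \<in> K1" unfolding K1_def using tp bd flow_nn[OF fl] by auto
    moreover have "\<phi> \<in> K2" unfolding K2_def Kc_def using tp flow_cap[OF fl] by auto
    moreover have "\<phi> \<in> K3" unfolding K3_def using tp fl unfolding is_polymatroidal_flow_def by auto
    ultimately show "\<phi> \<in> K1 \<inter> K2 \<inter> K3" by auto
  next
    fix \<phi> assume "\<phi> \<in> K1 \<inter> K2 \<inter> K3"
    then have tp: "\<phi> \<in> topspace X" and k1: "\<forall>e\<in>E. 0 \<le> \<phi> e \<and> \<phi> e \<le> B"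
      and k2: "\<forall>v\<in>V. \<forall>b A. A \<subseteq> G v b \<longrightarrow> sum \<phi> A \<le> f A"
      and k3: "\<forall>v\<in>V-{s,t}. sum \<phi> (in_edges E v) = sum \<phi> (out_edges E v)"
      unfolding K1_def K2_def K3_def Kc_def by auto
    have "flow \<phi>" unfolding is_polymatroidal_flow_def
      using k1 k3 k2[rule_format, where b=True] k2[rule_format, where b=False] by (auto simp: G_def)
    then show "\<phi> \<in> K" unfolding K_def using tp k1 by auto
  qed
  have cK1: "compactin X K1"
  proof -
    have "K1 = PiE E (\<lambda>_. {0..B})" unfolding K1_def top by auto
    moreover have "compactin X (PiE E (\<lambda>_. {0..B}))"
      unfolding X_def compactin_PiE by auto
    ultimately show ?thesis by simp
  qed
  have clK2: "closedin X K2" unfolding K2_def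
  proof (rule closedin_constraints)
    fix k assume "k \<in> Kc"
    then obtain v b A where k: "k = (v, b, A)" and A: "A \<subseteq> G v b" unfolding Kc_def by auto
    have "A \<subseteq> E" using A G_sub by blast
    then show "continuous_map X euclideanreal (\<lambda>\<phi>. sum \<phi> (snd (snd k)))"
      using cont_sum[of A] k by (simp add: X_def)
  qed auto
  have clK3: "closedin X K3" unfolding K3_def
    by (rule closedin_constraints) (use cont_sum in \<open>auto simp: X_def in_edges_def out_edges_def intro!: continuous_map_diff\<close>)
  have clK1: "closedin X K1" unfolding K1_def
  proof (rule closedin_constraints)
    fix e assume "e \<in> E"
    then show "continuous_map X euclideanreal (\<lambda>\<phi>. \<phi> e)"
      unfolding X_def by (rule continuous_map_product_projection)
  next
    fix e assume "e \<in> E"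
    show "closed {0..B}" by (rule closed_atLeastAtMost)
  qed
  have clK: "closedin X K" unfolding KK
    by (rule closedin_Int[OF closedin_Int[OF clK1 clK2] clK3])
  have cK: "compactin X K"
    by (rule closed_compactin[OF cK1 _ clK]) (unfold KK, blast)
  have contv: "continuous_map X euclideanreal (flow_value E s)"
  proof -
    have "continuous_map X euclideanreal (\<lambda>\<phi>. sum \<phi> (out_edges E s) - sum \<phi> (in_edges E s))"
      unfolding X_def by (intro continuous_map_diff cont_sum) (auto simp: in_edges_def out_edges_def)
    then show ?thesis unfolding flow_value_def[abs_def] .
  qed
  have cimg: "compact (flow_value E s ` K)"
    using image_compactin[OF cK contv] by simp
  have Bnn: "0 \<le> B" unfolding B_def using nonneg by (auto intro: sum_nonneg)
  have z: "restrict (\<lambda>_. 0) E \<in> K"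
  proof -
    have "flow (\<lambda>_. 0)" unfolding is_polymatroidal_flow_def
      using nonneg by (auto simp: in_edges_def out_edges_def)
    then have "flow (restrict (\<lambda>_. 0) E)" by (rule flow_restrict)
    then show ?thesis unfolding K_def top using Bnn by auto
  qed
  then have ne: "flow_value E s ` K \<noteq> {}" by blast
  obtain m where m: "m \<in> flow_value E s ` K" and mmax: "\<forall>y\<in>flow_value E s ` K. y \<le> m"
    using compact_attains_sup[OF cimg ne] by blast
  then obtain \<phi> where \<phi>K: "\<phi> \<in> K" and m\<phi>: "m = flow_value E s \<phi>" by blast
  have "\<forall>\<psi>. flow \<psi> \<longrightarrow> flow_value E s \<psi> \<le> flow_value E s \<phi>"
  proof (intro allI impI)
    fix \<psi> assume fp: "flow \<psi>"
    have "restrict \<psi> E \<in> K"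
      unfolding K_def top using flow_restrict(1)[OF fp] flow_bound[OF fp] by (auto simp: B_def)
    then have "flow_value E s (restrict \<psi> E) \<le> m" using mmax by blast
    then show "flow_value E s \<psi> \<le> flow_value E s \<phi>" using flow_restrict(2)[OF fp] m\<phi> by simp
  qed
  moreover have "flow \<phi>" using \<phi>K unfolding K_def by auto
  ultimately show ?thesis by blast
qed

end

theorem lemma6:
  fixes V :: "'v set" and E :: "('v \<times> 'v) set" and s t :: 'v
    and f :: "('v \<times> 'v) set \<Rightarrow> real"
  assumes "finite V" and "E \<subseteq> V \<times> V"
    and "s \<in> V" and "t \<in> V" and "s \<noteq> t"
    and nonneg: "\<And>A. A \<subseteq> E \<Longrightarrow> f A \<ge> 0"
    and normalized: "f {} = 0"
    and mono: "\<And>A B. A \<subseteq> B \<Longrightarrow> B \<subseteq> E \<Longrightarrow> f A \<le> f B"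
    and submod: "\<And>A B. A \<subseteq> E \<Longrightarrow> B \<subseteq> E \<Longrightarrow> f (A \<union> B) + f (A \<inter> B) \<le> f A + f B"
  shows "\<exists>C \<phi>. is_st_cut E s t C \<and> is_polymatroidal_flow V E f s t \<phi> \<and>
           (\<forall>C'. is_st_cut E s t C' \<longrightarrow> f_pf f V C \<le> f_pf f V C') \<and>
           (\<forall>\<psi>. is_polymatroidal_flow V E f s t \<psi> \<longrightarrow> flow_value E s \<psi> \<le> flow_value E s \<phi>) \<and>
           f_pf f V C = flow_value E s \<phi>"
proof -
  interpret P: PF V E s t f
    by unfold_locales (use assms in auto)
  obtain \<phi> where fl: "is_polymatroidal_flow V E f s t \<phi>"
    and mx: "\<forall>\<psi>. is_polymatroidal_flow V E f s t \<psi> \<longrightarrow> flow_value E s \<psi> \<le> flow_value E s \<phi>"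
    using P.max_flow_exists by blast
  interpret Q: PFf V E s t f \<phi>
    by unfold_locales (rule fl)
  have noend: "\<And>e b. (e, b) \<in> Q.R \<Longrightarrow> Q.exv (e, b) = t \<Longrightarrow> (b \<Longrightarrow> Q.free t True e) \<Longrightarrow> False"
  proof -
    fix e b assume inR: "(e, b) \<in> Q.R" and ex: "Q.exv (e, b) = t" and fr: "b \<Longrightarrow> Q.free t True e"
    obtain d where "Q.Inv (e, b) d" using Q.R_inv[OF inR] by blast
    then obtain \<psi> where "is_polymatroidal_flow V E f s t \<psi>" "flow_value E s \<psi> > flow_value E s \<phi>"
      using Q.improve[OF inR _ ex fr] by blast
    then show False using mx by force
  qed
  have "\<exists>C. is_st_cut E s t C \<and> f_pf f V C \<le> flow_value E s \<phi>"
    by (rule Q.cut_exists) (rule noend; assumption)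
  then obtain C where cut: "is_st_cut E s t C" and le: "f_pf f V C \<le> flow_value E s \<phi>"
    by blast
  have eq: "f_pf f V C = flow_value E s \<phi>"
    using le P.weak_duality[OF fl cut] by linarith
  have "\<forall>C'. is_st_cut E s t C' \<longrightarrow> f_pf f V C \<le> f_pf f V C'"
    using eq P.weak_duality[OF fl] by auto
  then show ?thesis using cut fl mx eq by blast
qed

end
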